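(* Consider the multi-block primal semidefinite program $\min_{\mathbf{X}\in\mathbb{X}}\{f(\mathbf{X}):=\langle\mathbf{C},\mathbf{X}\rangle \mid \mathcal{A}(\mathbf{X})=\mathbf{b},\ \mathbf{X}\in\mathcal{K}\}$ with optimal value $f^\star$, and suppose it satisfies Slater's condition. Let $\{(\mathbf{X}^k,\mathbf{y}^k,\mathbf{S}^k)\}$ be generated by the STRIDE algorithm described in the context. Then $\{f(\mathbf{X}^k)\}$ converges to $f^\star$.
   Context: $\mathbb{X}=\mathbb{S}^{n_1}\times\cdots\times\mathbb{S}^{n_l}$ (tuples of real symmetric matrices), $\langle\mathbf{C},\mathbf{X}\rangle=\sum_i\langle\mathbf{C}_i,\mathbf{X}_i\rangle$ (trace inner product), $\mathcal{A}:\mathbb{X}\to\mathbb{R}^m$ linear, $\mathcal{K}=\mathbb{S}^{n_1}_+\times\cdots\times\mathbb{S}^{n_l}_+$, and $\mathcal{F}_P=\{\mathbf{X}\in\mathbb{X}\mid\mathcal{A}(\mathbf{X})=\mathbf{b},\ \mathbf{X}\in\mathcal{K}\}$. STRIDE: given an initial point $(\mathbf{X}^0,\mathbf{S}^0,\mathbf{y}^0)\in\mathcal{K}\times\mathcal{K}\times\mathbb{R}^m$, a constant $\epsilon>0$, and a nondecreasing sequence $\sigma_k>0$, for $k=0,1,\dots$: (1) short projected-gradient step: $\overline{\mathbf{X}}^{k+1}=\Pi_{\mathcal{F}_P}(\mathbf{X}^k-\sigma_k\mathbf{C})$, where $\Pi_{\mathcal{F}_P}$ is the Euclidean projection onto $\mathcal{F}_P$,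 also producing dual iterates $(\mathbf{S}^{k+1},\mathbf{y}^{k+1})$ of the projection problem; (2) long step: compute a candidate $\widehat{\mathbf{X}}^{k+1}\in\mathbb{X}$ (in the paper, by rounding leading eigenvectors of $\overline{\mathbf{X}}^{k+1}$ to feasible points of an underlying polynomial problem, running local nonlinear-programming search, and lifting the best local solution to a rank-one moment matrix with its localizing matrices); (3) update: $\mathbf{X}^{k+1}=\widehat{\mathbf{X}}^{k+1}$ if $f(\widehat{\mathbf{X}}^{k+1})\le f(\overline{\mathbf{X}}^{k+1})-\epsilon$ and $\widehat{\mathbf{X}}^{k+1}\in\mathcal{F}_P$, otherwise $\mathbf{X}^{k+1}=\overline{\mathbf{X}}^{k+1}$. (The iteration is stopped when KKT residuals fall below a tolerance; convergence refers to the sequence generated.) *)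

theory Defs
  imports "HOL-Analysis.Analysis"
begin

text \<open>
  An element of the space X = S^{n_0} x ... x S^{n_{l-1}} is represented as a function
  X :: nat => nat => nat => real, where X i a b is the (a,b) entry of block i
  (i < l, a,b < n i).
\<close>

type_synonym blockmat = "nat \<Rightarrow> nat \<Rightarrow> nat \<Rightarrow> real"

definition in_space :: "nat \<Rightarrow> (nat \<Rightarrow> nat) \<Rightarrow> blockmat \<Rightarrow> bool" where
  "in_space l n X \<longleftrightarrow>
     (\<forall>i a b. X i a b = X i b a) \<and>
     (\<forall>i a b. \<not> (i < l \<and> a < n i \<and> b < n i) \<longrightarrow> X i a b = 0)"

definition inner_blk :: "nat \<Rightarrow> (nat \<Rightarrow> nat) \<Rightarrow> blockmat \<Rightarrow> blockmat \<Rightarrow> real" where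
  "inner_blk l n C X = (\<Sum>i<l. \<Sum>a<n i. \<Sum>b<n i. C i a b * X i a b)"

definition in_cone :: "nat \<Rightarrow> (nat \<Rightarrow> nat) \<Rightarrow> blockmat \<Rightarrow> bool" where
  "in_cone l n X \<longleftrightarrow> in_space l n X \<and>
     (\<forall>i<l. \<forall>v :: nat \<Rightarrow> real. (\<Sum>a<n i. \<Sum>b<n i. v a * X i a b * v b) \<ge> 0)"

definition in_int_cone :: "nat \<Rightarrow> (nat \<Rightarrow> nat) \<Rightarrow> blockmat \<Rightarrow> bool" where
  "in_int_cone l n X \<longleftrightarrow> in_space l n X \<and>
     (\<forall>i<l. \<forall>v :: nat \<Rightarrow> real. (\<exists>a<n i. v a \<noteq> 0) \<longrightarrow>
        (\<Sum>a<n i. \<Sum>b<n i. v a * X i a b * v b) > 0)"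

definition Aop :: "nat \<Rightarrow> (nat \<Rightarrow> nat) \<Rightarrow> nat \<Rightarrow> (nat \<Rightarrow> blockmat) \<Rightarrow> blockmat \<Rightarrow> nat \<Rightarrow> real" where
  "Aop l n m A X = (\<lambda>j. if j < m then inner_blk l n (A j) X else 0)"

definition feas :: "nat \<Rightarrow> (nat \<Rightarrow> nat) \<Rightarrow> nat \<Rightarrow> (nat \<Rightarrow> blockmat) \<Rightarrow> (nat \<Rightarrow> real) \<Rightarrow> blockmat set" where
  "feas l n m A b = {X. in_cone l n X \<and> (\<forall>j<m. inner_blk l n (A j) X = b j)}"

definition slater :: "nat \<Rightarrow> (nat \<Rightarrow> nat) \<Rightarrow> nat \<Rightarrow> (nat \<Rightarrow> blockmat) \<Rightarrow> (nat \<Rightarrow> real) \<Rightarrow> bool" where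
  "slater l n m A b \<longleftrightarrow> (\<exists>X. in_int_cone l n X \<and> (\<forall>j<m. inner_blk l n (A j) X = b j))"

definition is_proj :: "nat \<Rightarrow> (nat \<Rightarrow> nat) \<Rightarrow> blockmat set \<Rightarrow> blockmat \<Rightarrow> blockmat \<Rightarrow> bool" where
  "is_proj l n F Y P \<longleftrightarrow> P \<in> F \<and>
     (\<forall>Z\<in>F. inner_blk l n (\<lambda>i a b. Y i a b - P i a b) (\<lambda>i a b. Y i a b - P i a b)
             \<le> inner_blk l n (\<lambda>i a b. Y i a b - Z i a b) (\<lambda>i a b. Y i a b - Z i a b))"

end

theory Submission
  imports Defs
begin

definition T3 :: "nat \<Rightarrow> (nat \<Rightarrow> nat) \<Rightarrow> blockmat \<Rightarrow> real" where
  "T3 l n f = (\<Sum>i<l. \<Sum>a<n i. \<Sum>b<n i. f i a b)"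

lemma inner_T: "inner_blk l n U V = T3 l n (\<lambda>i a b. U i a b * V i a b)"
  by (simp add: inner_blk_def T3_def)

lemma T_add: "T3 l n f + T3 l n g = T3 l n (\<lambda>i a b. f i a b + g i a b)"
  by (simp add: T3_def sum.distrib)

lemma T_diff: "T3 l n f - T3 l n g = T3 l n (\<lambda>i a b. f i a b - g i a b)"
  by (simp add: T3_def sum_subtractf)

lemma T_scale: "c * T3 l n f = T3 l n (\<lambda>i a b. c * f i a b)"
  by (simp add: T3_def sum_distrib_left)

lemma T_cong: "(\<And>i a b. i < l \<Longrightarrow> a < n i \<Longrightarrow> b < n i \<Longrightarrow> f i a b = g i a b) \<Longrightarrow> T3 l n f = T3 l n g"
  unfolding T3_def by (intro sum.cong refl) auto

lemma T_nonneg: "(\<And>i a b. f i a b \<ge> 0) \<Longrightarrow> T3 l n f \<ge> 0"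
  unfolding T3_def by (intro sum_nonneg) auto

lemma nrm_nonneg: "inner_blk l n U U \<ge> 0"
  unfolding inner_T by (rule T_nonneg) simp

definition convexF :: "blockmat set \<Rightarrow> bool" where
  "convexF F \<longleftrightarrow> (\<forall>Z\<in>F. \<forall>P\<in>F. \<forall>t::real. 0 \<le> t \<and> t \<le> 1 \<longrightarrow> (\<lambda>i a b. P i a b + t * (Z i a b - P i a b)) \<in> F)"

lemma quad_comb:
  fixes t :: real shows
  "(\<Sum>a<N. \<Sum>c<N. v a * (P i a c + t * (Z i a c - P i a c)) * v c)
   = (1 - t) * (\<Sum>a<N. \<Sum>c<N. v a * P i a c * v c) + t * (\<Sum>a<N. \<Sum>c<N. v a * Z i a c * v c)"
proof -
  have "(1 - t) * (\<Sum>a<N. \<Sum>c<N. v a * P i a c * v c) + t * (\<Sum>a<N. \<Sum>c<N. v a * Z i a c * v c)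
     = (\<Sum>a<N. \<Sum>c<N. (1 - t) * (v a * P i a c * v c) + t * (v a * Z i a c * v c))"
    by (simp only: sum_distrib_left sum.distrib)
  also have "\<dots> = (\<Sum>a<N. \<Sum>c<N. v a * (P i a c + t * (Z i a c - P i a c)) * v c)"
    by (intro sum.cong refl) (simp add: algebra_simps)
  finally show ?thesis by simp
qed

lemma convex_feas: "convexF (feas l n m A b)"
  unfolding convexF_def
proof (intro ballI allI impI)
  fix Z P and t :: real
  assume Z: "Z \<in> feas l n m A b" and P: "P \<in> feas l n m A b" and t: "0 \<le> t \<and> t \<le> 1"
  let ?W = "\<lambda>i a b. P i a b + t * (Z i a b - P i a b)"
  have sp: "in_space l n ?W" using Z P by (simp add: feas_def in_cone_def in_space_def)
  have cone: "in_cone l n ?W"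
    unfolding in_cone_def
  proof (intro conjI sp allI impI)
    fix i v assume i: "i < l"
    have "(\<Sum>a<n i. \<Sum>c<n i. v a * P i a c * v c) \<ge> 0" "(\<Sum>a<n i. \<Sum>c<n i. v a * Z i a c * v c) \<ge> 0"
      using Z P i by (auto simp: feas_def in_cone_def)
    then show "0 \<le> (\<Sum>a<n i. \<Sum>c<n i. v a * ?W i a c * v c)"
      unfolding quad_comb using t by (intro add_nonneg_nonneg mult_nonneg_nonneg) auto
  qed
  have "\<forall>j<m. inner_blk l n (A j) ?W = b j"
  proof (intro allI impI)
    fix j assume j: "j < m"
    have "inner_blk l n (A j) ?W = inner_blk l n (A j) P + t * (inner_blk l n (A j) Z - inner_blk l n (A j) P)"
      unfolding inner_T T_diff T_scale T_add by (rule T_cong) (simp add: algebra_simps)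
    then show "inner_blk l n (A j) ?W = b j" using Z P j by (simp add: feas_def)
  qed
  then show "?W \<in> feas l n m A b" using cone by (simp add: feas_def)
qed

lemma VI:
  assumes proj: "is_proj l n F Y P" and cv: "convexF F" and Z: "Z \<in> F"
  shows "inner_blk l n (\<lambda>i a b. Y i a b - P i a b) (\<lambda>i a b. Z i a b - P i a b) \<le> 0"
proof (rule ccontr)
  let ?c = "inner_blk l n (\<lambda>i a b. Y i a b - P i a b) (\<lambda>i a b. Z i a b - P i a b)"
  let ?q = "inner_blk l n (\<lambda>i a b. Z i a b - P i a b) (\<lambda>i a b. Z i a b - P i a b)"
  assume "\<not> ?c \<le> 0" hence c: "?c > 0" by simp
  have P: "P \<in> F" using proj by (simp add: is_proj_def)
  have key: "2 * t * ?c \<le> t * t * ?q" if t: "0 \<le> t" "t \<le> 1" for t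
  proof -
    let ?W = "\<lambda>i a b. P i a b + t * (Z i a b - P i a b)"
    have "?W \<in> F" using cv Z P t unfolding convexF_def by blast
    hence le: "inner_blk l n (\<lambda>i a b. Y i a b - P i a b) (\<lambda>i a b. Y i a b - P i a b)
       \<le> inner_blk l n (\<lambda>i a b. Y i a b - ?W i a b) (\<lambda>i a b. Y i a b - ?W i a b)"
      using proj by (simp add: is_proj_def)
    have "inner_blk l n (\<lambda>i a b. Y i a b - ?W i a b) (\<lambda>i a b. Y i a b - ?W i a b)
      = inner_blk l n (\<lambda>i a b. Y i a b - P i a b) (\<lambda>i a b. Y i a b - P i a b) - 2 * t * ?c + t * t * ?q"
      unfolding inner_T T_diff T_scale T_add by (rule T_cong) (simp add: algebra_simps power2_eq_square)
    with le show ?thesis by simp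
  qed
  have q: "?q \<ge> 0" by (rule nrm_nonneg)
  show False
  proof (cases "?q = 0")
    case True
    with key[of 1] c show False by simp
  next
    case False
    with q have qp: "?q > 0" by simp
    define t where "t = min 1 (?c / ?q)"
    have t0: "t > 0" using c qp by (simp add: t_def)
    have t1: "t \<le> 1" by (simp add: t_def)
    have "t * ?q \<le> ?c" using qp by (simp add: t_def min_def field_simps split: if_splits)
    moreover have "2 * ?c \<le> t * ?q" using key[OF less_imp_le[OF t0] t1] t0
      by (simp add: mult.assoc)
    ultimately show False using c by simp
  qed
qed

lemma three_point:
  assumes proj: "is_proj l n F (\<lambda>i a c. Xk i a c - s * C i a c) P" and cv: "convexF F" and Z: "Z \<in> F"
  shows "2 * s * (inner_blk l n C P - inner_blk l n C Z)
    \<le> inner_blk l n (\<lambda>i a b. Xk i a b - Z i a b) (\<lambda>i a b. Xk i a b - Z i a b)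
     - inner_blk l n (\<lambda>i a b. P i a b - Z i a b) (\<lambda>i a b. P i a b - Z i a b)"
proof -
  have vi: "inner_blk l n (\<lambda>i a b. Xk i a b - s * C i a b - P i a b) (\<lambda>i a b. Z i a b - P i a b) \<le> 0"
    using VI[OF proj cv Z] by simp
  have eq: "inner_blk l n (\<lambda>i a b. Xk i a b - Z i a b) (\<lambda>i a b. Xk i a b - Z i a b)
     - inner_blk l n (\<lambda>i a b. P i a b - Z i a b) (\<lambda>i a b. P i a b - Z i a b)
     - 2 * s * (inner_blk l n C P - inner_blk l n C Z)
    = inner_blk l n (\<lambda>i a b. Xk i a b - P i a b) (\<lambda>i a b. Xk i a b - P i a b)
     - 2 * inner_blk l n (\<lambda>i a b. Xk i a b - s * C i a b - P i a b) (\<lambda>i a b. Z i a b - P i a b)"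
    unfolding inner_T T_diff T_scale T_add by (rule T_cong) (simp add: algebra_simps power2_eq_square)
  have "inner_blk l n (\<lambda>i a b. Xk i a b - P i a b) (\<lambda>i a b. Xk i a b - P i a b) \<ge> 0"
    by (rule nrm_nonneg)
  with eq vi show ?thesis by linarith
qed

theorem theorem3:
  fixes l :: nat and n :: "nat \<Rightarrow> nat" and m :: nat
    and C :: blockmat and A :: "nat \<Rightarrow> blockmat" and b :: "nat \<Rightarrow> real"
    and fstar :: real and \<epsilon> :: real and \<sigma> :: "nat \<Rightarrow> real"
    and X Xbar Xhat :: "nat \<Rightarrow> blockmat"
  assumes C_sp: "in_space l n C"
    and A_sp: "\<forall>j<m. in_space l n (A j)"
    and slater: "slater l n m A b"
    and bdd: "bdd_below ((\<lambda>Z. inner_blk l n C Z) ` feas l n m A b)"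
    and fstar: "fstar = (INF Z\<in>feas l n m A b. inner_blk l n C Z)"
    and eps: "\<epsilon> > 0"
    and sigma_pos: "\<forall>k. \<sigma> k > 0"
    and sigma_mono: "mono \<sigma>"
    and X0: "in_cone l n (X 0)"
    and short_step: "\<forall>k. is_proj l n (feas l n m A b)
                          (\<lambda>i a c. X k i a c - \<sigma> k * C i a c) (Xbar (Suc k))"
    and long_step: "\<forall>k. in_space l n (Xhat (Suc k))"
    and update: "\<forall>k. X (Suc k) =
        (if inner_blk l n C (Xhat (Suc k)) \<le> inner_blk l n C (Xbar (Suc k)) - \<epsilon>
            \<and> Xhat (Suc k) \<in> feas l n m A b
         then Xhat (Suc k) else Xbar (Suc k))"
  shows "(\<lambda>k. inner_blk l n C (X k)) \<longlonglongrightarrow> fstar"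
proof -
  define FP where "FP = feas l n m A b"
  define f where "f = (\<lambda>Z. inner_blk l n C Z)"
  define nrm where "nrm = (\<lambda>U V. inner_blk l n (\<lambda>i a b. U i a b - V i a b) (\<lambda>i a b. U i a b - V i a b))"
  have cv: "convexF FP" unfolding FP_def by (rule convex_feas)
  have XbarF: "Xbar (Suc k) \<in> FP" for k using short_step by (simp add: is_proj_def FP_def)
  have XF: "X (Suc k) \<in> FP" for k using update XbarF[of k] by (simp add: FP_def)
  have TP: "2 * \<sigma> k * (f (Xbar (Suc k)) - f Z) \<le> nrm (X k) Z - nrm (Xbar (Suc k)) Z" if "Z \<in> FP" for k Z
    using three_point[OF short_step[rule_format, of k] cv[unfolded FP_def]] that
    unfolding f_def nrm_def FP_def by blast
  have nrm_nn: "nrm U V \<ge> 0" for U V unfolding nrm_def by (rule nrm_nonneg)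
  have nrm0: "nrm U U = 0" for U unfolding nrm_def by (simp add: inner_blk_def)
  have Xle: "f (X (Suc k)) \<le> f (Xbar (Suc k))" for k
    using update[rule_format, of k] eps by (auto simp: f_def)
  have dec1: "f (Xbar (Suc (Suc k))) \<le> f (X (Suc k))" for k
  proof -
    have "2 * \<sigma> (Suc k) * (f (Xbar (Suc (Suc k))) - f (X (Suc k))) \<le> 0"
      using TP[OF XF[of k], of "Suc k"] nrm0[of "X (Suc k)"] nrm_nn[of "Xbar (Suc (Suc k))" "X (Suc k)"] by simp
    moreover have "\<sigma> (Suc k) > 0" using sigma_pos by simp
    ultimately show ?thesis by (simp add: mult_le_0_iff)
  qed
  have lower: "fstar \<le> f Z" if "Z \<in> FP" for Z
    unfolding fstar f_def using cINF_lower[OF bdd] that FP_def by blast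
  define g where "g = (\<lambda>k. f (X (Suc k)))"
  have decg: "decseq g" unfolding decseq_Suc_iff g_def using dec1 Xle order_trans by blast
  have gb: "\<forall>i. fstar \<le> g i" unfolding g_def using lower XF by blast
  obtain L where gL: "g \<longlonglongrightarrow> L" and Lle: "\<forall>i. L \<le> g i"
    using decseq_convergent[OF decg gb] by blast
  have "(\<lambda>k. g k - g (Suc k)) \<longlonglongrightarrow> L - L"
    by (intro tendsto_diff gL) (rule LIMSEQ_Suc[OF gL])
  then obtain K where K: "\<forall>k\<ge>K. norm (g k - g (Suc k) - 0) < \<epsilon>"
    using LIMSEQ_D[OF _ eps] by fastforce
  have nolong: "X (Suc (Suc k)) = Xbar (Suc (Suc k))" if "k \<ge> K" for k
  proof (rule ccontr)
    assume ne: "X (Suc (Suc k)) \<noteq> Xbar (Suc (Suc k))"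
    hence "X (Suc (Suc k)) = Xhat (Suc (Suc k))" and
      "f (Xhat (Suc (Suc k))) \<le> f (Xbar (Suc (Suc k))) - \<epsilon>"
      using update[rule_format, of "Suc k"] by (auto simp: f_def split: if_splits)
    hence "g (Suc k) \<le> g k - \<epsilon>" using dec1[of k] by (simp add: g_def)
    with K that show False by auto
  qed
  have LZ: "L \<le> f Z" if Z: "Z \<in> FP" for Z
  proof (rule ccontr)
    assume "\<not> L \<le> f Z"
    hence LZ: "L - f Z > 0" by simp
    define \<delta> where "\<delta> = 2 * \<sigma> 0 * (L - f Z)"
    have dpos: "\<delta> > 0" using LZ sigma_pos unfolding \<delta>_def by simp
    define D where "D = (\<lambda>j. nrm (X (Suc (K + j))) Z)"
    have step: "D (Suc j) \<le> D j - \<delta>" for j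
    proof -
      have e: "X (Suc (Suc (K + j))) = Xbar (Suc (Suc (K + j)))" using nolong by simp
      have t: "2 * \<sigma> (Suc (K + j)) * (g (Suc (K + j)) - f Z) \<le> D j - D (Suc j)"
        using TP[OF Z, of "Suc (K + j)"] e unfolding D_def g_def by simp
      have "\<sigma> 0 \<le> \<sigma> (Suc (K + j))" using sigma_mono by (simp add: mono_def)
      moreover have "L - f Z \<le> g (Suc (K + j)) - f Z" using Lle by simp
      ultimately have "\<sigma> 0 * (L - f Z) \<le> \<sigma> (Suc (K + j)) * (g (Suc (K + j)) - f Z)"
        using LZ sigma_pos by (intro mult_mono) (auto simp: less_imp_le)
      with t show ?thesis unfolding \<delta>_def by linarith
    qed
    have ind: "D j \<le> D 0 - real j * \<delta>" for j
    proof (induction j)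
      case 0 then show ?case by simp
    next
      case (Suc j) then show ?case using step[of j] by (simp add: algebra_simps)
    qed
    obtain j :: nat where j: "D 0 < real j * \<delta>"
      using reals_Archimedean3[OF dpos] by blast
    have "D j \<ge> 0" unfolding D_def by (rule nrm_nn)
    with ind[of j] j show False by linarith
  qed
  have "FP \<noteq> {}" using XF by blast
  hence "L \<le> fstar" unfolding fstar using LZ cINF_greatest unfolding FP_def f_def by metis
  moreover have "fstar \<le> L" using gL gb by (intro LIMSEQ_le_const) auto
  ultimately have "g \<longlonglongrightarrow> fstar" using gL by simp
  then show ?thesis unfolding g_def f_def using filterlim_sequentially_Suc by blast
qed

end
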